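(* Let $S:\mathbb{R}^n\to\mathbb{R}^n$ be nonexpansive (i.e. $\|Su-Sv\|\le\|u-v\|$ for all $u,v$) and suppose $S$ has a fixed point $w^\star$, i.e. $Sw^\star=w^\star$. Let $w^1\in\mathbb{R}^n$ and define the sequence $\{w^k\}$ by $w^{k+1}=\tfrac12 w^k+\tfrac12 Sw^k$ for $k\ge 1$. Then for every integer $N\ge 1$, $$\left\|\tfrac12 Sw^N-\tfrac12 w^N\right\|^2\le \frac{(N-1)^{N-1}}{N^N}\,\|w^1-w^\star\|^2,$$ with the convention $0^0=1$. *)

theory Defs
  imports "HOL-Analysis.Analysis"
begin

end

theory Submission
  imports Defs
begin

lemma step_id:
  fixes y g h :: "'a::real_inner" and n K :: real
  shows "(n-1)*((n-1-K)*(y\<bullet>y) + 2*(K+1)*(y\<bullet>g) + (K+1)*(n-1)*(g\<bullet>g))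
       - n*((n-2-K)*((y-h)\<bullet>(y-h)) + 2*(K+2)*((y-h)\<bullet>h) + (K+2)*(n-1)*(h\<bullet>h))
     = n*(2*(n-3-K)*(h\<bullet>(y-h)) + 2*(K+1)*(n-1)*((g-h)\<bullet>h))
       + (K+1)*((n *\<^sub>R h - y - (n-1) *\<^sub>R g)\<bullet>(n *\<^sub>R h - y - (n-1) *\<^sub>R g))"
  by (simp add: inner_diff_left inner_diff_right inner_commute[of h y] inner_commute[of h g] inner_commute[of g y]  algebra_simps)

lemma last_id:
  fixes y g h :: "'a::real_inner" and n :: real
  shows "(y + (n-1) *\<^sub>R g)\<bullet>(y + (n-1) *\<^sub>R g) - n^2*(h\<bullet>h)
     = 2*n*(h\<bullet>(y-h)) + 2*n*(n-1)*((g-h)\<bullet>h) + (y + (n-1) *\<^sub>R g - n *\<^sub>R h)\<bullet>(y + (n-1) *\<^sub>R g - n *\<^sub>R h)"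
  by (simp add: inner_diff_left inner_diff_right inner_commute[of h y] inner_commute[of h g] inner_commute[of g y] algebra_simps power2_eq_square)

lemma firm:
  fixes S :: "'a::real_inner \<Rightarrow> 'a"
  assumes "norm (S u - S v) \<le> norm (u - v)"
  shows "((1/2) *\<^sub>R (u - S u) - (1/2) *\<^sub>R (v - S v)) \<bullet> (((1/2) *\<^sub>R u + (1/2) *\<^sub>R S u) - ((1/2) *\<^sub>R v + (1/2) *\<^sub>R S v)) \<ge> 0"
proof -
  have e: "((1/2) *\<^sub>R (u - S u) - (1/2) *\<^sub>R (v - S v)) \<bullet> (((1/2) *\<^sub>R u + (1/2) *\<^sub>R S u) - ((1/2) *\<^sub>R v + (1/2) *\<^sub>R S v))
     = (1/4) * ((u - v) \<bullet> (u - v) - (S u - S v) \<bullet> (S u - S v))"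
    by (simp add: inner_diff_left inner_diff_right inner_add_left inner_add_right inner_commute algebra_simps)
  have "(S u - S v) \<bullet> (S u - S v) \<le> (u - v) \<bullet> (u - v)"
    using assms by (metis norm_ge_zero power_mono power2_norm_eq_inner)
  then show ?thesis unfolding e by simp
qed

theorem theorem1:
  fixes S :: "real ^ 'n \<Rightarrow> real ^ 'n"
    and w :: "nat \<Rightarrow> real ^ 'n"
    and wstar :: "real ^ 'n"
    and N :: nat
  assumes nonexp: "\<And>u v. norm (S u - S v) \<le> norm (u - v)"
    and fixpt: "S wstar = wstar"
    and rec: "\<And>k. k \<ge> 1 \<Longrightarrow> w (Suc k) = (1/2) *\<^sub>R w k + (1/2) *\<^sub>R S (w k)"
    and N: "N \<ge> 1"
  shows "(norm ((1/2) *\<^sub>R S (w N) - (1/2) *\<^sub>R w N))\<^sup>2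
           \<le> (real ((N - 1) ^ (N - 1)) / real (N ^ N)) * (norm (w 1 - wstar))\<^sup>2"
proof -
  define x where "x k = w (Suc k) - wstar" for k
  define g where "g k = x k - x (Suc k)" for k
  have wS: "w (Suc (Suc k)) = (1/2) *\<^sub>R w (Suc k) + (1/2) *\<^sub>R S (w (Suc k))" for k
    using rec[of "Suc k"] by simp
  have gk: "g k = (1/2) *\<^sub>R (w (Suc k) - S (w (Suc k)))" for k
    unfolding g_def x_def wS by (simp add: algebra_simps)
  have I: "g k \<bullet> x (Suc k) \<ge> 0" for k
  proof -
    have "g k = (1/2) *\<^sub>R (w (Suc k) - S (w (Suc k))) - (1/2) *\<^sub>R (wstar - S wstar)"
      using gk fixpt by simp
    moreover have "x (Suc k) = ((1/2) *\<^sub>R w (Suc k) + (1/2) *\<^sub>R S (w (Suc k))) - ((1/2) *\<^sub>R wstar + (1/2) *\<^sub>R S wstar)"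
      unfolding x_def wS fixpt by (simp add: algebra_simps scaleR_add_left[symmetric])
    ultimately show ?thesis using firm[of S "w (Suc k)" wstar] nonexp by simp
  qed
  have C: "(g k - g (Suc k)) \<bullet> g (Suc k) \<ge> 0" for k
  proof -
    have "g k - g (Suc k) = (1/2) *\<^sub>R (w (Suc k) - S (w (Suc k))) - (1/2) *\<^sub>R (w (Suc (Suc k)) - S (w (Suc (Suc k))))"
      using gk by simp
    moreover have "g (Suc k) = ((1/2) *\<^sub>R w (Suc k) + (1/2) *\<^sub>R S (w (Suc k))) - ((1/2) *\<^sub>R w (Suc (Suc k)) + (1/2) *\<^sub>R S (w (Suc (Suc k))))"
      unfolding g_def x_def wS[of "Suc k"] wS[of k] by (simp add: algebra_simps)
    ultimately show ?thesis using firm[of S "w (Suc k)" "w (Suc (Suc k))"] nonexp by simp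
  qed
  have goal_eq: "(norm ((1/2) *\<^sub>R S (w N) - (1/2) *\<^sub>R w N))\<^sup>2 = g (N-1) \<bullet> g (N-1)"
  proof -
    have "(1/2) *\<^sub>R S (w N) - (1/2) *\<^sub>R w N = - g (N-1)"
      using gk[of "N-1"] N by (simp add: algebra_simps)
    then show ?thesis by (simp add: power2_norm_eq_inner)
  qed
  have x0: "(norm (w 1 - wstar))\<^sup>2 = x 0 \<bullet> x 0"
    by (simp add: x_def power2_norm_eq_inner)
  define n where "n = real N"
  have coef: "real ((N - 1) ^ (N - 1)) / real (N ^ N) = (n-1)^(N-1) / n^N"
    using N by (simp add: n_def of_nat_diff)
  show ?thesis
  proof (cases "N = 1")
    case True
    have "x 0 = x 1 + g 0" by (simp add: g_def)
    then have "x 0 \<bullet> x 0 = x 1 \<bullet> x 1 + 2 * (g 0 \<bullet> x 1) + g 0 \<bullet> g 0"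
      by (simp add: inner_add_left inner_add_right inner_commute)
    moreover have "x 1 \<bullet> x 1 \<ge> 0" by simp
    ultimately have "g 0 \<bullet> g 0 \<le> x 0 \<bullet> x 0" using I[of 0] by simp
    then show ?thesis unfolding goal_eq x0 using True by simp
  next
    case False
    then have N2: "N \<ge> 2" using N by simp
    define Phi where "Phi k = (n-1-real k)*(x (Suc k)\<bullet>x (Suc k)) + 2*(real k+1)*(x (Suc k)\<bullet>g k) + (real k+1)*(n-1)*(g k\<bullet>g k)" for k
    define r where "r = (n-1)/n"
    have npos: "n > 0" using N by (simp add: n_def)
    have step: "Phi (Suc k) \<le> r * Phi k" if "Suc k \<le> N - 2" for k
    proof -
      have K: "real k \<le> n - 3" using that N2 unfolding n_def by linarith
      have xs: "x (Suc (Suc k)) = x (Suc k) - g (Suc k)" by (simp add: g_def)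
      have id: "(n-1) * Phi k - n * Phi (Suc k) = n*(2*(n-3-real k)*(g (Suc k)\<bullet>(x (Suc k) - g (Suc k))) + 2*(real k+1)*(n-1)*((g k - g (Suc k))\<bullet>g (Suc k)))
       + (real k+1)*((n *\<^sub>R g (Suc k) - x (Suc k) - (n-1) *\<^sub>R g k)\<bullet>(n *\<^sub>R g (Suc k) - x (Suc k) - (n-1) *\<^sub>R g k))"
        unfolding Phi_def xs using step_id[of n "real k" "x (Suc k)" "g k" "g (Suc k)"]
        by (simp add: algebra_simps)
      have "0 \<le> n*(2*(n-3-real k)*(g (Suc k)\<bullet>(x (Suc k) - g (Suc k))) + 2*(real k+1)*(n-1)*((g k - g (Suc k))\<bullet>g (Suc k)))"
        using I[of "Suc k"] C[of k] K npos N2 xs by (simp add: n_def)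
      moreover have "0 \<le> (real k+1)*((n *\<^sub>R g (Suc k) - x (Suc k) - (n-1) *\<^sub>R g k)\<bullet>(n *\<^sub>R g (Suc k) - x (Suc k) - (n-1) *\<^sub>R g k))"
        by simp
      ultimately have "n * Phi (Suc k) \<le> (n-1) * Phi k" using id by linarith
      then show ?thesis unfolding r_def using npos by (simp add: field_simps)
    qed
    have rpos: "r \<ge> 0" unfolding r_def using N2 npos by (simp add: n_def)
    have iter: "Phi j \<le> r^j * Phi 0" if "j \<le> N - 2" for j
      using that
    proof (induction j)
      case 0 then show ?case by simp
    next
      case (Suc j)
      then have "Phi j \<le> r^j * Phi 0" by simp
      then have "r * Phi j \<le> r * (r^j * Phi 0)" using rpos by (simp add: mult_left_mono)
      then show ?case using step[OF Suc.prems] by simp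
    qed
    have init: "Phi 0 \<le> (n-1) * (x 0 \<bullet> x 0)"
    proof -
      have "x 0 = x 1 + g 0" by (simp add: g_def)
      then have "(n-1) * (x 0 \<bullet> x 0) - Phi 0 = 2*(n-2)*(g 0 \<bullet> x 1)"
        unfolding Phi_def by (simp add: inner_add_left inner_add_right inner_commute algebra_simps)
      moreover have "n - 2 \<ge> 0" using N2 by (simp add: n_def)
      moreover have "0 \<le> 2*(n-2)*(g 0 \<bullet> x 1)" using I[of 0] \<open>n - 2 \<ge> 0\<close> by simp
      ultimately show ?thesis by linarith
    qed
    have fin: "n^2 * (g (N-1) \<bullet> g (N-1)) \<le> Phi (N-2)"
    proof -
      have e1: "Suc (N-2) = N - 1" using N2 by simp
      have xs: "x (N-1) = x (Suc (N-2)) " using e1 by simp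
      have Ph: "Phi (N-2) = (x (N-1) + (n-1) *\<^sub>R g (N-2))\<bullet>(x (N-1) + (n-1) *\<^sub>R g (N-2))"
        unfolding Phi_def e1 using N2
        by (simp add: n_def of_nat_diff inner_add_left inner_add_right inner_commute algebra_simps)
      have x2: "x N = x (N-1) - g (N-1)" using N by (simp add: g_def)
      have I': "g (N-1) \<bullet> (x (N-1) - g (N-1)) \<ge> 0" using I[of "N-1"] x2 N by simp
      have C': "(g (N-2) - g (N-1)) \<bullet> g (N-1) \<ge> 0" using C[of "N-2"] e1 by simp
      have "0 \<le> 2*n*(g (N-1)\<bullet>(x (N-1)-g (N-1))) + 2*n*(n-1)*((g (N-2)-g (N-1))\<bullet>g (N-1))"
        using I' C' npos N2 by (simp add: n_def)
      moreover have "0 \<le> (x (N-1) + (n-1) *\<^sub>R g (N-2) - n *\<^sub>R g (N-1))\<bullet>(x (N-1) + (n-1) *\<^sub>R g (N-2) - n *\<^sub>R g (N-1))" by simp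
      ultimately show ?thesis unfolding Ph using last_id[of "x (N-1)" n "g (N-2)" "g (N-1)"]
        by linarith
    qed
    have "r^(N-2) * Phi 0 \<le> r^(N-2) * ((n-1) * (x 0 \<bullet> x 0))"
      using init rpos by (simp add: mult_left_mono)
    then have A: "n^2 * (g (N-1) \<bullet> g (N-1)) \<le> r^(N-2) * ((n-1) * (x 0 \<bullet> x 0))"
      using fin iter[of "N-2"] by linarith
    obtain M where M: "N = Suc (Suc M)" using N2 by (metis add_2_eq_Suc le_Suc_ex)
    have B: "r^(N-2) * (n-1) = ((n-1)^(N-1) / n^N) * n^2"
      unfolding r_def M using npos by (simp add: power_divide field_simps power2_eq_square)
    have "n^2 * (g (N-1) \<bullet> g (N-1)) \<le> n^2 * ((n-1)^(N-1) / n^N * (x 0 \<bullet> x 0))"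
    proof -
      have "r^(N-2) * ((n-1) * (x 0 \<bullet> x 0)) = (r^(N-2) * (n-1)) * (x 0 \<bullet> x 0)" by (simp only: mult.assoc)
      also have "\<dots> = n^2 * ((n-1)^(N-1) / n^N * (x 0 \<bullet> x 0))" unfolding B by (simp only: mult_ac)
      finally show ?thesis using A by simp
    qed
    then have "g (N-1) \<bullet> g (N-1) \<le> (n-1)^(N-1) / n^N * (x 0 \<bullet> x 0)"
      using npos by (simp only: mult_le_cancel_left_pos zero_less_power)
    then show ?thesis unfolding goal_eq x0 coef .
  qed
qed

end
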